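(* Let $X$ be a finite discrete space with at least two elements, $\Gamma$ a nonempty countable set, $\varphi:\Gamma\to\Gamma$ any map. Then $(X^\Gamma,\sigma_\varphi)$ is dense distributional chaotic if and only if $\varphi$ has no periodic point.
   Context: $X^\Gamma$ has the product topology and a fixed compatible metric $d$; $\sigma_\varphi((x_\alpha)_{\alpha\in\Gamma})=(x_{\varphi(\alpha)})_{\alpha\in\Gamma}$. For $f=\sigma_\varphi$, $x,y\in X^\Gamma$, $t>0$: $\xi(x,y,t,n)=\#\{i\in\{0,\dots,n-1\}:d(f^i(x),f^i(y))<t\}$, $F_{xy}(t)=\liminf_n \xi(x,y,t,n)/n$, $F^*_{xy}(t)=\limsup_n\xi(x,y,t,n)/n$. The system is dense distributional chaotic if there exist a dense uncountable set $A\subseteq X^\Gamma$ and $\varepsilon>0$ such that for all distinct $x,y\in A$: $F^*_{xy}(s)=1$ for every $s>0$ and $F_{xy}(\varepsilon)=0$. *)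

theory Defs
  imports "HOL-Analysis.Analysis"
begin

definition sigma_phi :: "'g set \<Rightarrow> ('g \<Rightarrow> 'g) \<Rightarrow> ('g \<Rightarrow> 'a) \<Rightarrow> ('g \<Rightarrow> 'a)" where
  "sigma_phi \<Gamma> \<phi> x = restrict (\<lambda>\<alpha>. x (\<phi> \<alpha>)) \<Gamma>"

definition dc_xi :: "('b \<Rightarrow> 'b \<Rightarrow> real) \<Rightarrow> ('b \<Rightarrow> 'b) \<Rightarrow> 'b \<Rightarrow> 'b \<Rightarrow> real \<Rightarrow> nat \<Rightarrow> nat" where
  "dc_xi d f x y t n = card {i \<in> {0..<n}. d ((f ^^ i) x) ((f ^^ i) y) < t}"

definition dc_F_lower :: "('b \<Rightarrow> 'b \<Rightarrow> real) \<Rightarrow> ('b \<Rightarrow> 'b) \<Rightarrow> 'b \<Rightarrow> 'b \<Rightarrow> real \<Rightarrow> ereal" where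
  "dc_F_lower d f x y t = liminf (\<lambda>n. ereal (real (dc_xi d f x y t n) / real n))"

definition dc_F_upper :: "('b \<Rightarrow> 'b \<Rightarrow> real) \<Rightarrow> ('b \<Rightarrow> 'b) \<Rightarrow> 'b \<Rightarrow> 'b \<Rightarrow> real \<Rightarrow> ereal" where
  "dc_F_upper d f x y t = limsup (\<lambda>n. ereal (real (dc_xi d f x y t n) / real n))"

definition dense_distributional_chaotic :: "'b topology \<Rightarrow> ('b \<Rightarrow> 'b \<Rightarrow> real) \<Rightarrow> ('b \<Rightarrow> 'b) \<Rightarrow> bool" where
  "dense_distributional_chaotic T d f \<longleftrightarrow>
     (\<exists>A. A \<subseteq> topspace T \<and> T closure_of A = topspace T \<and> uncountable A \<and>
        (\<exists>\<epsilon>>0. \<forall>x\<in>A. \<forall>y\<in>A. x \<noteq> y \<longrightarrow>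
            (\<forall>s>0. dc_F_upper d f x y s = 1) \<and> dc_F_lower d f x y \<epsilon> = 0))"

end

theory Submission
  imports Defs
begin


lemma cyl_open:
  assumes "F \<subseteq> \<Gamma>" "finite F"
  shows "openin (product_topology (\<lambda>_. discrete_topology X) \<Gamma>) {v \<in> PiE \<Gamma> (\<lambda>_. X). \<forall>i\<in>F. v i = u i}"
  unfolding openin_product_topology_alt
proof (intro ballI)
  fix x assume x: "x \<in> {v \<in> PiE \<Gamma> (\<lambda>_. X). \<forall>i\<in>F. v i = u i}"
  define U where "U i = (if i \<in> F then {u i} else X)" for i
  have "finite {i \<in> \<Gamma>. U i \<noteq> topspace (discrete_topology X)}"
    by (rule finite_subset[OF _ assms(2)]) (auto simp: U_def)
  moreover have "x \<in> PiE \<Gamma> U" using x by (auto simp: U_def PiE_iff)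
  moreover have "PiE \<Gamma> U \<subseteq> {v \<in> PiE \<Gamma> (\<lambda>_. X). \<forall>i\<in>F. v i = u i}"
  proof
    fix v assume v: "v \<in> PiE \<Gamma> U"
    have "v i \<in> X" if "i \<in> \<Gamma>" for i
    proof (cases "i \<in> F")
      case True
      then have "v i = u i" using v that by (auto simp: U_def PiE_iff)
      also have "u i = x i" using x True by auto
      finally show ?thesis using x that by (auto simp: PiE_iff)
    next
      case False then show ?thesis using v that by (auto simp: U_def PiE_iff)
    qed
    moreover have "v i = u i" if "i \<in> F" for i using v that assms(1) by (force simp: U_def PiE_iff)
    ultimately show "v \<in> {v \<in> PiE \<Gamma> (\<lambda>_. X). \<forall>i\<in>F. v i = u i}" using v by (auto simp: PiE_iff)
  qed
  ultimately show "\<exists>U. finite {i \<in> \<Gamma>. U i \<noteq> topspace (discrete_topology X)} \<and>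
          (\<forall>i\<in>\<Gamma>. openin (discrete_topology X) (U i)) \<and> x \<in> Pi\<^sub>E \<Gamma> U \<and> Pi\<^sub>E \<Gamma> U \<subseteq> {v \<in> PiE \<Gamma> (\<lambda>_. X). \<forall>i\<in>F. v i = u i}"
    using x by (intro exI[of _ U]) (auto simp: U_def PiE_iff)
qed

lemma funpow_in:
  assumes "\<phi> \<in> \<Gamma> \<rightarrow> \<Gamma>" "\<beta> \<in> \<Gamma>" shows "(\<phi> ^^ n) \<beta> \<in> \<Gamma>"
  using assms by (induction n) auto

lemma sigma_iter:
  assumes "\<phi> \<in> \<Gamma> \<rightarrow> \<Gamma>" "x \<in> PiE \<Gamma> (\<lambda>_. X)"
  shows "(sigma_phi \<Gamma> \<phi> ^^ n) x = restrict (\<lambda>\<beta>. x ((\<phi> ^^ n) \<beta>)) \<Gamma>"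
proof (induction n)
  case 0
  then show ?case using assms(2) by (simp add: PiE_restrict)
next
  case (Suc n)
  have "(sigma_phi \<Gamma> \<phi> ^^ Suc n) x = sigma_phi \<Gamma> \<phi> ((sigma_phi \<Gamma> \<phi> ^^ n) x)" by simp
  also have "\<dots> = restrict (\<lambda>\<beta>. x ((\<phi> ^^ Suc n) \<beta>)) \<Gamma>"
    unfolding Suc sigma_phi_def using assms(1)
    by (intro restrict_ext) (auto simp: funpow_Suc_right simp del: funpow.simps)
  finally show ?case .
qed

lemma sigma_iter_in:
  assumes "\<phi> \<in> \<Gamma> \<rightarrow> \<Gamma>" "x \<in> PiE \<Gamma> (\<lambda>_. X)"
  shows "(sigma_phi \<Gamma> \<phi> ^^ n) x \<in> PiE \<Gamma> (\<lambda>_. X)"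
  using assms funpow_in[OF assms(1)] by (auto simp: sigma_iter PiE_iff)

lemma uncountable_bool_fun: "uncountable (UNIV :: (nat \<Rightarrow> bool) set)"
proof -
  have "\<not> (\<exists>f::nat \<Rightarrow> (nat \<Rightarrow> bool). range f = UNIV)"
  proof
    assume "\<exists>f::nat \<Rightarrow> (nat \<Rightarrow> bool). range f = UNIV"
    then obtain f :: "nat \<Rightarrow> (nat \<Rightarrow> bool)" where "range f = UNIV" by blast
    then obtain n where "f n = (\<lambda>k. \<not> f k k)" by (metis UNIV_I imageE)
    then show False by (metis)
  qed
  then show ?thesis unfolding uncountable_def by simp
qed



lemma prod_compact:
  assumes "finite X"
  shows "compact_space (product_topology (\<lambda>_. discrete_topology X) \<Gamma>)"
  using assms by (simp add: compact_space_product_topology compact_space_discrete_topology)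

lemma finite_subcover:
  assumes "finite X"
    and "Metric_space.mtopology (PiE \<Gamma> (\<lambda>_. X)) d = product_topology (\<lambda>_. discrete_topology X) \<Gamma>"
    and "\<And>u. u \<in> PiE \<Gamma> (\<lambda>_. X) \<Longrightarrow> openin (Metric_space.mtopology (PiE \<Gamma> (\<lambda>_. X)) d) (C u)"
    and "\<And>u. u \<in> PiE \<Gamma> (\<lambda>_. X) \<Longrightarrow> u \<in> C u"
  shows "\<exists>M0. finite M0 \<and> M0 \<subseteq> PiE \<Gamma> (\<lambda>_. X) \<and> PiE \<Gamma> (\<lambda>_. X) \<subseteq> (\<Union>u\<in>M0. C u)"
proof -
  let ?T = "product_topology (\<lambda>_. discrete_topology X) \<Gamma>"
  have "compactin ?T (topspace ?T)" using prod_compact[OF assms(1)] compact_space_def by blast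
  then have cp: "compactin ?T (PiE \<Gamma> (\<lambda>_. X))" by simp
  have "\<forall>V\<in>C ` PiE \<Gamma> (\<lambda>_. X). openin ?T V" using assms(2,3) by auto
  moreover have "PiE \<Gamma> (\<lambda>_. X) \<subseteq> \<Union> (C ` PiE \<Gamma> (\<lambda>_. X))" using assms(4) by blast
  ultimately obtain FF where FF: "finite FF" "FF \<subseteq> C ` PiE \<Gamma> (\<lambda>_. X)" "PiE \<Gamma> (\<lambda>_. X) \<subseteq> \<Union>FF"
    using cp unfolding compactin_def by meson
  then obtain M0 where "M0 \<subseteq> PiE \<Gamma> (\<lambda>_. X)" "finite M0" "FF = C ` M0"
    by (meson finite_subset_image)
  then show ?thesis using FF by blast
qed

lemma L2:
  assumes "finite X" and ms: "Metric_space (PiE \<Gamma> (\<lambda>_. X)) d"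
    and mt: "Metric_space.mtopology (PiE \<Gamma> (\<lambda>_. X)) d = product_topology (\<lambda>_. discrete_topology X) \<Gamma>"
    and "s > 0"
  shows "\<exists>F. finite F \<and> F \<subseteq> \<Gamma> \<and> (\<forall>u\<in>PiE \<Gamma> (\<lambda>_. X). \<forall>v\<in>PiE \<Gamma> (\<lambda>_. X). (\<forall>i\<in>F. u i = v i) \<longrightarrow> d u v < s)"
proof -
  interpret Metric_space "PiE \<Gamma> (\<lambda>_. X)" d by (rule ms)
  let ?M = "PiE \<Gamma> (\<lambda>_. X)"
  have "\<exists>Fu. finite Fu \<and> Fu \<subseteq> \<Gamma> \<and> (\<forall>v\<in>?M. (\<forall>i\<in>Fu. v i = u i) \<longrightarrow> v \<in> mball u (s/2))" if u: "u \<in> ?M" for u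
  proof -
    have "openin (product_topology (\<lambda>_. discrete_topology X) \<Gamma>) (mball u (s/2))"
      using mt by (metis openin_mball)
    moreover have "u \<in> mball u (s/2)" using u \<open>s>0\<close> by simp
    ultimately obtain U where U: "finite {i \<in> \<Gamma>. U i \<noteq> topspace (discrete_topology X)}" "u \<in> PiE \<Gamma> U" "PiE \<Gamma> U \<subseteq> mball u (s/2)"
      unfolding openin_product_topology_alt by meson
    then have U: "finite {i \<in> \<Gamma>. U i \<noteq> X}" "u \<in> PiE \<Gamma> U" "PiE \<Gamma> U \<subseteq> mball u (s/2)" by auto
    show ?thesis
    proof (intro exI[of _ "{i \<in> \<Gamma>. U i \<noteq> X}"] conjI ballI impI)
      fix v assume v: "v \<in> ?M" "\<forall>i\<in>{i \<in> \<Gamma>. U i \<noteq> X}. v i = u i"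
      have "v \<in> PiE \<Gamma> U"
      proof -
        have "v i \<in> U i" if "i \<in> \<Gamma>" for i
        proof (cases "U i = X")
          case True then show ?thesis using v that by (auto simp: PiE_iff)
        next
          case False then show ?thesis using v(2) u U(2) that by (auto simp: PiE_iff)
        qed
        then show ?thesis using v(1) by (auto simp: PiE_iff)
      qed
      then show "v \<in> mball u (s/2)" using U(3) by blast
    qed (use U in auto)
  qed
  then have "\<forall>u\<in>?M. \<exists>Fu. finite Fu \<and> Fu \<subseteq> \<Gamma> \<and> (\<forall>v\<in>?M. (\<forall>i\<in>Fu. v i = u i) \<longrightarrow> v \<in> mball u (s/2))" by blast
  from this[THEN bchoice] obtain Fc where Fc0: "\<forall>u\<in>?M. finite (Fc u) \<and> Fc u \<subseteq> \<Gamma> \<and> (\<forall>v\<in>?M. (\<forall>i\<in>Fc u. v i = u i) \<longrightarrow> v \<in> mball u (s/2))"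
    by blast
  have Fc: "finite (Fc u) \<and> Fc u \<subseteq> \<Gamma> \<and> (\<forall>v\<in>?M. (\<forall>i\<in>Fc u. v i = u i) \<longrightarrow> v \<in> mball u (s/2))" if "u \<in> ?M" for u
    using Fc0 that by blast
  define C where "C u = {v \<in> ?M. \<forall>i\<in>Fc u. v i = u i}" for u
  have "\<exists>M0. finite M0 \<and> M0 \<subseteq> ?M \<and> ?M \<subseteq> (\<Union>u\<in>M0. C u)"
  proof (rule finite_subcover[OF assms(1) mt])
    fix u assume u: "u \<in> ?M"
    show "openin mtopology (C u)" unfolding C_def mt by (rule cyl_open) (use Fc[OF u] in auto)
    show "u \<in> C u" using u by (simp add: C_def)
  qed
  then obtain M0 where M0: "finite M0" "M0 \<subseteq> ?M" "?M \<subseteq> (\<Union>u\<in>M0. C u)" by blast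
  show ?thesis
  proof (intro exI[of _ "\<Union>(Fc ` M0)"] conjI ballI impI)
    show "finite (\<Union>(Fc ` M0))" using M0 Fc by blast
    show "\<Union>(Fc ` M0) \<subseteq> \<Gamma>" using M0 Fc by blast
    fix v w assume vw: "v \<in> ?M" "w \<in> ?M" "\<forall>i\<in>\<Union>(Fc ` M0). v i = w i"
    then obtain u where u: "u \<in> M0" "v \<in> C u" using M0 by blast
    have "w \<in> C u" using u vw unfolding C_def by auto
    then have "d u w < s/2" "d u v < s/2" using u Fc[of u] M0 unfolding C_def by auto
    moreover have "d v w \<le> d v u + d u w" using triangle[of v u w] vw M0 u by blast
    moreover have "d v u = d u v" by (rule commute)
    ultimately show "d v w < s" by linarith
  qed
qed

lemma L1:
  assumes "finite X" and ms: "Metric_space (PiE \<Gamma> (\<lambda>_. X)) d"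
    and mt: "Metric_space.mtopology (PiE \<Gamma> (\<lambda>_. X)) d = product_topology (\<lambda>_. discrete_topology X) \<Gamma>"
    and F: "finite F" "F \<subseteq> \<Gamma>"
  shows "\<exists>\<delta>>0. \<forall>u\<in>PiE \<Gamma> (\<lambda>_. X). \<forall>v\<in>PiE \<Gamma> (\<lambda>_. X). d u v < \<delta> \<longrightarrow> (\<forall>i\<in>F. u i = v i)"
proof -
  interpret Metric_space "PiE \<Gamma> (\<lambda>_. X)" d by (rule ms)
  let ?M = "PiE \<Gamma> (\<lambda>_. X)"
  have "\<exists>r>0. mball u r \<subseteq> {v \<in> ?M. \<forall>i\<in>F. v i = u i}" if u: "u \<in> ?M" for u
  proof -
    have "openin mtopology {v \<in> ?M. \<forall>i\<in>F. v i = u i}" using mt cyl_open[OF F(2,1)] by metis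
    then show ?thesis using u unfolding openin_mtopology by auto
  qed
  then have "\<forall>u\<in>?M. \<exists>r>0. mball u r \<subseteq> {v \<in> ?M. \<forall>i\<in>F. v i = u i}" by blast
  from this[THEN bchoice] obtain r where r0: "\<forall>u\<in>?M. r u > 0 \<and> mball u (r u) \<subseteq> {v \<in> ?M. \<forall>i\<in>F. v i = u i}"
    by blast
  have r: "r u > 0 \<and> mball u (r u) \<subseteq> {v \<in> ?M. \<forall>i\<in>F. v i = u i}" if "u \<in> ?M" for u
    using r0 that by blast
  have "\<exists>M0. finite M0 \<and> M0 \<subseteq> ?M \<and> ?M \<subseteq> (\<Union>u\<in>M0. mball u (r u / 2))"
  proof (rule finite_subcover[OF assms(1) mt])
    fix u assume u: "u \<in> ?M"
    show "openin mtopology (mball u (r u / 2))" by (rule openin_mball)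
    show "u \<in> mball u (r u / 2)" using u r[OF u] by simp
  qed
  then obtain M0 where M0: "finite M0" "M0 \<subseteq> ?M" "?M \<subseteq> (\<Union>u\<in>M0. mball u (r u / 2))" by blast
  define \<delta> where "\<delta> = Min (insert 1 ((\<lambda>u. r u / 2) ` M0))"
  have "\<delta> > 0" unfolding \<delta>_def using M0 r by (subst Min_gr_iff) auto
  moreover have "\<forall>i\<in>F. v i = w i" if vw: "v \<in> ?M" "w \<in> ?M" "d v w < \<delta>" for v w
  proof -
    obtain u where u: "u \<in> M0" "v \<in> mball u (r u / 2)" using M0 vw by blast
    have "\<delta> \<le> r u / 2" unfolding \<delta>_def using M0 u by (intro Min_le) auto
    then have "d u w < r u" using triangle[of u v w] u vw M0 by auto
    moreover have "d u v < r u / 2" using u(2) by simp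
    moreover have "0 \<le> d u v" by simp
    ultimately have "d u v < r u" by linarith
    with \<open>d u w < r u\<close> have "w \<in> mball u (r u)" "v \<in> mball u (r u)" using u vw M0 by auto
    moreover have "u \<in> ?M" using u M0 by blast
    ultimately have "w \<in> {v \<in> ?M. \<forall>i\<in>F. v i = u i}" "v \<in> {v \<in> ?M. \<forall>i\<in>F. v i = u i}"
      using r[of u] by blast+
    then show ?thesis by auto
  qed
  ultimately show ?thesis by blast
qed



lemma limsup_one:
  fixes f :: "nat \<Rightarrow> nat"
  assumes le: "\<And>n. f n \<le> n"
    and fr: "\<And>e N. e > 0 \<Longrightarrow> \<exists>n\<ge>N. (1 - e) * real n \<le> real (f n)"
  shows "limsup (\<lambda>n. ereal (real (f n) / real n)) = 1"
proof (rule antisym)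
  show "limsup (\<lambda>n. ereal (real (f n) / real n)) \<le> 1"
  proof (rule Limsup_bounded, rule always_eventually, rule allI)
    fix n
    have "real (f n) / real n \<le> 1"
      using le[of n] by (cases "n = 0") (auto simp: divide_le_eq_1)
    then show "ereal (real (f n) / real n) \<le> 1" by simp
  qed
next
  show "1 \<le> limsup (\<lambda>n. ereal (real (f n) / real n))"
  proof (rule ccontr)
    let ?L = "limsup (\<lambda>n. ereal (real (f n) / real n))"
    assume "\<not> 1 \<le> ?L"
    then have "?L < 1" by simp
    then obtain y where y: "?L < ereal y" "ereal y < 1" using ereal_dense2 by blast
    have "eventually (\<lambda>n. ereal (real (f n) / real n) < ereal y) sequentially"
      using Limsup_lessD[OF y(1)] .
    then obtain N where N: "\<And>n. n \<ge> N \<Longrightarrow> real (f n) / real n < y"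
      unfolding eventually_sequentially by auto
    have "y < 1" using y by simp
    then obtain n where n: "n \<ge> max N 1" "(1 - (1 - y)) * real n \<le> real (f n)"
      using fr[of "1 - y" "max N 1"] by auto
    have "real n > 0" using n by simp
    then have "y \<le> real (f n) / real n" using n(2) by (simp add: le_divide_eq)
    with N[of n] n show False by simp
  qed
qed

lemma liminf_zero:
  fixes f :: "nat \<Rightarrow> nat"
  assumes fr: "\<And>e N. e > 0 \<Longrightarrow> \<exists>n\<ge>N. real (f n) \<le> e * real n"
  shows "liminf (\<lambda>n. ereal (real (f n) / real n)) = 0"
proof (rule antisym)
  show "0 \<le> liminf (\<lambda>n. ereal (real (f n) / real n))"
    by (rule Liminf_bounded) (auto intro!: always_eventually)
next
  show "liminf (\<lambda>n. ereal (real (f n) / real n)) \<le> 0"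
  proof (rule ccontr)
    let ?L = "liminf (\<lambda>n. ereal (real (f n) / real n))"
    assume "\<not> ?L \<le> 0"
    then have "0 < ?L" by simp
    then obtain y where y: "0 < ereal y" "ereal y < ?L" using ereal_dense2 by blast
    have "eventually (\<lambda>n. ereal (real (f n) / real n) > ereal y) sequentially"
      using less_LiminfD[OF y(2)] .
    then obtain N where N: "\<And>n. n \<ge> N \<Longrightarrow> real (f n) / real n > y"
      unfolding eventually_sequentially by auto
    have "y > 0" using y by simp
    then obtain n where n: "n \<ge> max N 1" "real (f n) \<le> y * real n"
      using fr[of y "max N 1"] by auto
    have "real n > 0" using n by simp
    then have "real (f n) / real n \<le> y" using n(2) by (simp add: divide_le_eq)
    with N[of n] n show False by simp
  qed
qed



lemma fact_ratio:
  fixes M N :: nat and e :: real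
  assumes "e > 0"
  shows "\<exists>K. \<forall>k\<ge>K. real (fact k) + real M \<le> e * (real (fact (Suc k)) - real M) \<and> N + M \<le> (fact (Suc k) :: nat)"
proof -
  define K where "K = nat \<lceil>(1 + M + e*M) / e\<rceil> + N + M"
  have "real (fact k) + real M \<le> e * (real (fact (Suc k)) - real M) \<and> N + M \<le> (fact (Suc k) :: nat)"
    if k: "k \<ge> K" for k
  proof
    have "real k \<ge> (1 + M + e*M) / e" using k unfolding K_def by linarith
    then have "e * real k \<ge> 1 + M + e*M" using assms by (simp add: divide_le_eq mult.commute)
    then have ek: "e * (real k + 1) \<ge> 1 + M + e*M" using assms by (simp add: algebra_simps)
    define F where "F = real (fact k)"
    have F1: "F \<ge> 1" unfolding F_def by simp
    have fs: "real (fact (Suc k)) = (real k + 1) * F" unfolding F_def by (simp add: algebra_simps)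
    have "e * (real (fact (Suc k)) - real M) = (e * (real k + 1)) * F - e * M"
      unfolding fs by (simp add: algebra_simps)
    also have "\<dots> \<ge> (1 + M + e*M) * F - e * M"
      using mult_right_mono[OF ek, of F] F1 by linarith
    finally have 1: "e * (real (fact (Suc k)) - real M) \<ge> (1 + M + e*M) * F - e * M" .
    have "M * F \<ge> M" using F1 by (simp add: mult_le_cancel_left1)
    moreover have "e * M * F \<ge> e * M" using mult_left_mono[OF F1, of "e*M"] assms by simp
    ultimately have "(1 + M + e*M) * F - e * M \<ge> F + M" by (simp add: algebra_simps)
    with 1 show "real (fact k) + real M \<le> e * (real (fact (Suc k)) - real M)" unfolding F_def by linarith
    have "N + M \<le> Suc k" using k unfolding K_def by simp
    also have "Suc k \<le> fact (Suc k)" by (rule fact_ge_self)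
    finally show "N + M \<le> (fact (Suc k) :: nat)" .
  qed
  then show ?thesis by blast
qed

lemma count_interval:
  assumes "\<And>i. L \<le> i \<Longrightarrow> i < n \<Longrightarrow> P i"
  shows "n - L \<le> card {i \<in> {0..<n}. P i}"
proof -
  have "{L..<n} \<subseteq> {i \<in> {0..<n}. P i}" using assms by auto
  then have "card {L..<n} \<le> card {i \<in> {0..<n}. P i}" by (intro card_mono) auto
  then show ?thesis by simp
qed

lemma count_interval2:
  assumes "\<And>i. L \<le> i \<Longrightarrow> i < n \<Longrightarrow> \<not> P i"
  shows "card {i \<in> {0..<n}. P i} \<le> L"
proof -
  have "{i \<in> {0..<n}. P i} \<subseteq> {0..<L}" using assms by (auto simp: not_le[symmetric])
  then have "card {i \<in> {0..<n}. P i} \<le> card {0..<L}" by (intro card_mono) auto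
  then show ?thesis by simp
qed

lemma block_unique:
  assumes "(fact k :: nat) \<le> j" "j < fact (Suc k)" "(fact k' :: nat) \<le> j" "j < fact (Suc k')"
  shows "k = k'"
proof (rule ccontr)
  assume "k \<noteq> k'"
  then consider "Suc k \<le> k'" | "Suc k' \<le> k" by linarith
  then show False
  proof cases
    case 1 then have "(fact (Suc k) :: nat) \<le> fact k'" by (rule fact_mono)
    then show False using assms by linarith
  next
    case 2 then have "(fact (Suc k') :: nat) \<le> fact k" by (rule fact_mono)
    then show False using assms by linarith
  qed
qed

definition pat :: "(nat \<Rightarrow> bool) \<Rightarrow> nat \<Rightarrow> bool" where
  "pat s j = (\<exists>q. (fact (2*q+1) :: nat) \<le> j \<and> j < fact (Suc (2*q+1)) \<and> s (fst (prod_decode q)))"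

lemma pat_even:
  assumes "(fact (2*q) :: nat) \<le> j" "j < fact (Suc (2*q))"
  shows "\<not> pat s j"
proof
  assume "pat s j"
  then obtain q' where "(fact (2*q'+1) :: nat) \<le> j" "j < fact (Suc (2*q'+1))" unfolding pat_def by blast
  then have "2*q = 2*q'+1" using block_unique assms by blast
  then show False by presburger
qed

lemma pat_odd:
  assumes "(fact (2*q+1) :: nat) \<le> j" "j < fact (Suc (2*q+1))"
  shows "pat s j \<longleftrightarrow> s (fst (prod_decode q))"
proof
  assume "pat s j"
  then obtain q' where "(fact (2*q'+1) :: nat) \<le> j" "j < fact (Suc (2*q'+1))" "s (fst (prod_decode q'))"
    unfolding pat_def by blast
  then have "2*q+1 = 2*q'+1" using block_unique assms by blast
  then show "s (fst (prod_decode q))" using \<open>s (fst (prod_decode q'))\<close> by simp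
qed (use assms in \<open>auto simp: pat_def\<close>)



context
  fixes \<Gamma> :: "'g set" and \<phi> :: "'g \<Rightarrow> 'g"
  assumes phi: "\<phi> \<in> \<Gamma> \<rightarrow> \<Gamma>" and np: "\<not> (\<exists>\<alpha>\<in>\<Gamma>. \<exists>n>0. (\<phi> ^^ n) \<alpha> = \<alpha>)"
begin

lemma orbit_inj:
  assumes "\<alpha> \<in> \<Gamma>" "(\<phi> ^^ i) \<alpha> = (\<phi> ^^ j) \<alpha>"
  shows "i = j"
proof (rule ccontr)
  have aux: False if "i < j" "(\<phi> ^^ i) \<alpha> = (\<phi> ^^ j) \<alpha>" for i j
  proof -
    have "(\<phi> ^^ (j - i)) ((\<phi> ^^ i) \<alpha>) = (\<phi> ^^ (j - i + i)) \<alpha>"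
      by (simp add: funpow_add)
    also have "j - i + i = j" using that by simp
    finally have "(\<phi> ^^ (j - i)) ((\<phi> ^^ i) \<alpha>) = (\<phi> ^^ j) \<alpha>" .
    then have "(\<phi> ^^ (j - i)) ((\<phi> ^^ i) \<alpha>) = (\<phi> ^^ i) \<alpha>" using that by simp
    moreover have "(\<phi> ^^ i) \<alpha> \<in> \<Gamma>" using funpow_in[OF phi assms(1)] .
    moreover have "j - i > 0" using that by simp
    ultimately show False using np by blast
  qed
  assume "i \<noteq> j"
  then show False using aux[of i j] aux[of j i] assms(2) by (cases "i < j") auto
qed

lemma orbit_shift:
  assumes "\<alpha> \<in> \<Gamma>" "\<gamma> \<in> \<Gamma>" "(\<phi> ^^ i0) \<alpha> = (\<phi> ^^ j0) \<gamma>" "(\<phi> ^^ i) \<alpha> = (\<phi> ^^ j) \<gamma>"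
  shows "j + i0 = i + j0"
proof -
  have "(\<phi> ^^ (i + j0)) \<gamma> = (\<phi> ^^ i) ((\<phi> ^^ j0) \<gamma>)" by (simp add: funpow_add)
  also have "\<dots> = (\<phi> ^^ i) ((\<phi> ^^ i0) \<alpha>)" using assms(3) by simp
  also have "\<dots> = (\<phi> ^^ (i + i0)) \<alpha>" by (simp add: funpow_add)
  also have "\<dots> = (\<phi> ^^ (i0 + i)) \<alpha>" by (simp add: add.commute)
  also have "\<dots> = (\<phi> ^^ i0) ((\<phi> ^^ i) \<alpha>)" by (simp add: funpow_add)
  also have "\<dots> = (\<phi> ^^ i0) ((\<phi> ^^ j) \<gamma>)" using assms(4) by simp
  also have "\<dots> = (\<phi> ^^ (j + i0)) \<gamma>" by (simp add: funpow_add add.commute)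
  finally have "i + j0 = j + i0" by (rule orbit_inj[OF assms(2)])
  then show ?thesis by simp
qed

lemma finite_hits:
  assumes "\<beta> \<in> \<Gamma>" "finite G"
  shows "finite {i. (\<phi> ^^ i) \<beta> \<in> G}"
proof -
  have "finite {i. (\<phi> ^^ i) \<beta> = g}" for g
  proof (cases "\<exists>i0. (\<phi> ^^ i0) \<beta> = g")
    case True
    then obtain i0 where "(\<phi> ^^ i0) \<beta> = g" by blast
    then have "{i. (\<phi> ^^ i) \<beta> = g} \<subseteq> {i0}" using orbit_inj[OF assms(1)] by auto
    then show ?thesis using finite_subset by blast
  qed simp
  moreover have "{i. (\<phi> ^^ i) \<beta> \<in> G} = (\<Union>g\<in>G. {i. (\<phi> ^^ i) \<beta> = g})" by auto
  ultimately show ?thesis using assms(2) by simp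
qed

lemma eventually_avoid:
  assumes "finite F" "F \<subseteq> \<Gamma>" "finite G"
  shows "\<exists>K. \<forall>i\<ge>K. \<forall>\<beta>\<in>F. (\<phi> ^^ i) \<beta> \<notin> G"
proof -
  have "finite (\<Union>\<beta>\<in>F. {i. (\<phi> ^^ i) \<beta> \<in> G})"
    using assms finite_hits by blast
  then obtain K where "\<forall>i\<in>(\<Union>\<beta>\<in>F. {i. (\<phi> ^^ i) \<beta> \<in> G}). i < K"
    using finite_nat_set_iff_bounded by blast
  then show ?thesis by (metis (mono_tags, lifting) UN_I leD mem_Collect_eq)
qed

lemma shift_bound:
  assumes "finite F" "F \<subseteq> \<Gamma>" "\<gamma>0 \<in> \<Gamma>"
  shows "\<exists>C. \<forall>\<beta>\<in>F. \<forall>i j. (\<phi> ^^ i) \<beta> = (\<phi> ^^ j) \<gamma>0 \<longrightarrow> i \<le> j + C \<and> j \<le> i + C"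
proof -
  have "\<forall>\<beta>\<in>F. \<exists>c. \<forall>i j. (\<phi> ^^ i) \<beta> = (\<phi> ^^ j) \<gamma>0 \<longrightarrow> i \<le> j + c \<and> j \<le> i + c"
  proof
    fix \<beta> assume b: "\<beta> \<in> F"
    show "\<exists>c. \<forall>i j. (\<phi> ^^ i) \<beta> = (\<phi> ^^ j) \<gamma>0 \<longrightarrow> i \<le> j + c \<and> j \<le> i + c"
    proof (cases "\<exists>i0 j0. (\<phi> ^^ i0) \<beta> = (\<phi> ^^ j0) \<gamma>0")
      case True
      then obtain i0 j0 where ij: "(\<phi> ^^ i0) \<beta> = (\<phi> ^^ j0) \<gamma>0" by blast
      show ?thesis
      proof (intro exI[of _ "i0 + j0"] allI impI)
        fix i j assume "(\<phi> ^^ i) \<beta> = (\<phi> ^^ j) \<gamma>0"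
        then have "j + i0 = i + j0" using orbit_shift[OF _ assms(3) ij] b assms(2) by blast
        then show "i \<le> j + (i0 + j0) \<and> j \<le> i + (i0 + j0)" by linarith
      qed
    qed auto
  qed
  from this[THEN bchoice] obtain cf where cf: "\<forall>\<beta>\<in>F. \<forall>i j. (\<phi> ^^ i) \<beta> = (\<phi> ^^ j) \<gamma>0 \<longrightarrow> i \<le> j + cf \<beta> \<and> j \<le> i + cf \<beta>"
    by blast
  show ?thesis
  proof (intro exI[of _ "sum cf F"] ballI allI impI)
    fix \<beta> i j assume b: "\<beta> \<in> F" and e: "(\<phi> ^^ i) \<beta> = (\<phi> ^^ j) \<gamma>0"
    have "cf \<beta> \<le> sum cf F" using b assms(1) by (intro member_le_sum) auto
    then show "i \<le> j + sum cf F \<and> j \<le> i + sum cf F" using cf b e by fastforce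
  qed
qed

end



definition gseq :: "'a \<Rightarrow> 'a \<Rightarrow> (nat \<Rightarrow> bool) \<Rightarrow> nat \<Rightarrow> 'a" where
  "gseq a b s j = (if pat s j then b else a)"

definition zpt :: "'g set \<Rightarrow> ('g \<Rightarrow> 'g) \<Rightarrow> 'g \<Rightarrow> 'a \<Rightarrow> 'a \<Rightarrow> (nat \<Rightarrow> bool) \<Rightarrow> 'g \<Rightarrow> 'a" where
  "zpt \<Gamma> \<phi> \<gamma>0 a b s \<beta> = (if \<beta> \<in> \<Gamma> then (if \<exists>j. \<beta> = (\<phi> ^^ j) \<gamma>0 then gseq a b s (THE j. \<beta> = (\<phi> ^^ j) \<gamma>0) else a) else undefined)"

lemma real_diff_ge: "real n - real L \<le> real (n - L)"
  by (cases "L \<le> n") auto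

context
  fixes \<Gamma> :: "'g set" and \<phi> :: "'g \<Rightarrow> 'g" and \<gamma>0 :: 'g
  assumes phi: "\<phi> \<in> \<Gamma> \<rightarrow> \<Gamma>" and np: "\<not> (\<exists>\<alpha>\<in>\<Gamma>. \<exists>n>0. (\<phi> ^^ n) \<alpha> = \<alpha>)" and g0: "\<gamma>0 \<in> \<Gamma>"
begin

lemma zpt_on:
  assumes "(\<phi> ^^ j) \<gamma>0 = \<beta>"
  shows "zpt \<Gamma> \<phi> \<gamma>0 a b s \<beta> = gseq a b s j"
proof -
  have "\<beta> \<in> \<Gamma>" using funpow_in[OF phi g0] assms by blast
  moreover have "(THE j. \<beta> = (\<phi> ^^ j) \<gamma>0) = j"
    using assms orbit_inj[OF phi np g0] by (intro the_equality) auto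
  ultimately show ?thesis using assms unfolding zpt_def by auto
qed

lemma zpt_off:
  assumes "\<beta> \<in> \<Gamma>" "\<forall>j. \<beta> \<noteq> (\<phi> ^^ j) \<gamma>0"
  shows "zpt \<Gamma> \<phi> \<gamma>0 a b s \<beta> = a"
  using assms unfolding zpt_def by auto

lemma agree_many:
  assumes F: "finite F" "F \<subseteq> \<Gamma>" and G: "finite G"
    and hx: "\<forall>\<beta>\<in>\<Gamma>. \<beta> \<notin> G \<longrightarrow> x \<beta> = zpt \<Gamma> \<phi> \<gamma>0 a b s \<beta>"
    and hy: "\<forall>\<beta>\<in>\<Gamma>. \<beta> \<notin> G \<longrightarrow> y \<beta> = zpt \<Gamma> \<phi> \<gamma>0 a b s' \<beta>"
    and e: "e > 0"
  shows "\<exists>n\<ge>N. (1 - e) * real n \<le> real (card {i \<in> {0..<n}. \<forall>\<beta>\<in>F. x ((\<phi> ^^ i) \<beta>) = y ((\<phi> ^^ i) \<beta>)})"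
proof -
  obtain K1 where K1: "\<forall>i\<ge>K1. \<forall>\<beta>\<in>F. (\<phi> ^^ i) \<beta> \<notin> G"
    using eventually_avoid[OF phi np F G] by blast
  obtain C where C: "\<forall>\<beta>\<in>F. \<forall>i j. (\<phi> ^^ i) \<beta> = (\<phi> ^^ j) \<gamma>0 \<longrightarrow> i \<le> j + C \<and> j \<le> i + C"
    using shift_bound[OF phi np F g0] by blast
  define M where "M = C + K1"
  obtain Kr where Kr: "\<forall>k\<ge>Kr. real (fact k) + real M \<le> e * (real (fact (Suc k)) - real M) \<and> N + M \<le> (fact (Suc k) :: nat)"
    using fact_ratio[OF e, of M N] by blast
  define k where "k = 2 * Kr"
  have k: "real (fact k) + real M \<le> e * (real (fact (Suc k)) - real M)" "N + M \<le> (fact (Suc k) :: nat)"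
  proof -
    have "Kr \<le> k" unfolding k_def by simp
    then show "real (fact k) + real M \<le> e * (real (fact (Suc k)) - real M)" "N + M \<le> (fact (Suc k) :: nat)"
      using Kr by blast+
  qed
  define n where "n = (fact (Suc k) :: nat) - M"
  define L where "L = (fact k :: nat) + M"
  have good: "\<forall>\<beta>\<in>F. x ((\<phi> ^^ i) \<beta>) = y ((\<phi> ^^ i) \<beta>)" if i: "L \<le> i" "i < n" for i
  proof
    fix \<beta> assume b: "\<beta> \<in> F"
    have inG: "(\<phi> ^^ i) \<beta> \<in> \<Gamma>" using funpow_in[OF phi] b F(2) by blast
    have notG: "(\<phi> ^^ i) \<beta> \<notin> G" using K1 b i unfolding L_def M_def by auto
    have xv: "x ((\<phi> ^^ i) \<beta>) = zpt \<Gamma> \<phi> \<gamma>0 a b s ((\<phi> ^^ i) \<beta>)" using hx inG notG by blast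
    have yv: "y ((\<phi> ^^ i) \<beta>) = zpt \<Gamma> \<phi> \<gamma>0 a b s' ((\<phi> ^^ i) \<beta>)" using hy inG notG by blast
    show "x ((\<phi> ^^ i) \<beta>) = y ((\<phi> ^^ i) \<beta>)"
    proof (cases "\<exists>j. (\<phi> ^^ i) \<beta> = (\<phi> ^^ j) \<gamma>0")
      case True
      then obtain j where j: "(\<phi> ^^ i) \<beta> = (\<phi> ^^ j) \<gamma>0" by blast
      then have "i \<le> j + C" "j \<le> i + C" using C b by auto
      moreover have "M \<le> (fact (Suc k) :: nat)" using k(2) by linarith
      ultimately have "(fact (2*Kr) :: nat) \<le> j" "j < fact (Suc (2*Kr))"
        using i unfolding L_def n_def M_def k_def by linarith+
      then have "\<not> pat s j" "\<not> pat s' j" using pat_even by blast+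
      have "zpt \<Gamma> \<phi> \<gamma>0 a b s ((\<phi> ^^ i) \<beta>) = gseq a b s j" "zpt \<Gamma> \<phi> \<gamma>0 a b s' ((\<phi> ^^ i) \<beta>) = gseq a b s' j"
        by (rule zpt_on[OF j[symmetric]])+
      then show ?thesis using xv yv \<open>\<not> pat s j\<close> \<open>\<not> pat s' j\<close> by (simp add: gseq_def)
    next
      case False
      then show ?thesis using xv yv zpt_off[OF inG] by metis
    qed
  qed
  have "n - L \<le> card {i \<in> {0..<n}. \<forall>\<beta>\<in>F. x ((\<phi> ^^ i) \<beta>) = y ((\<phi> ^^ i) \<beta>)}"
    by (rule count_interval) (use good in auto)
  then have cnt: "real n - real L \<le> real (card {i \<in> {0..<n}. \<forall>\<beta>\<in>F. x ((\<phi> ^^ i) \<beta>) = y ((\<phi> ^^ i) \<beta>)})"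
    using real_diff_ge[of n L] by linarith
  have Mle: "M \<le> (fact (Suc k) :: nat)" using k(2) by linarith
  then have rn: "real n = real (fact (Suc k)) - real M" unfolding n_def by (simp add: of_nat_diff)
  have "real L \<le> e * real n" using k(1) rn unfolding L_def by simp
  then have "(1 - e) * real n \<le> real n - real L" by (simp add: algebra_simps)
  moreover have "N \<le> n" using k(2) unfolding n_def by linarith
  ultimately show ?thesis using cnt by (intro exI[of _ n]) auto
qed

lemma differ_many:
  assumes G: "finite G"
    and hx: "\<forall>\<beta>\<in>\<Gamma>. \<beta> \<notin> G \<longrightarrow> x \<beta> = zpt \<Gamma> \<phi> \<gamma>0 a b s \<beta>"
    and hy: "\<forall>\<beta>\<in>\<Gamma>. \<beta> \<notin> G \<longrightarrow> y \<beta> = zpt \<Gamma> \<phi> \<gamma>0 a b s' \<beta>"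
    and sm: "s m \<noteq> s' m" and ab: "a \<noteq> b"
    and e: "e > 0"
  shows "\<exists>n\<ge>N. real (card {i \<in> {0..<n}. x ((\<phi> ^^ i) \<gamma>0) = y ((\<phi> ^^ i) \<gamma>0)}) \<le> e * real n"
proof -
  obtain K2 where K2: "\<forall>i\<ge>K2. \<forall>\<beta>\<in>{\<gamma>0}. (\<phi> ^^ i) \<beta> \<notin> G"
    using eventually_avoid[OF phi np _ _ G, of "{\<gamma>0}"] g0 by blast
  define M where "M = K2"
  obtain Kr where Kr: "\<forall>k\<ge>Kr. real (fact k) + real M \<le> e * (real (fact (Suc k)) - real M) \<and> N + M \<le> (fact (Suc k) :: nat)"
    using fact_ratio[OF e, of M N] by blast
  define q where "q = prod_encode (m, Kr)"
  have "Kr \<le> q" unfolding q_def by (rule le_prod_encode_2)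
  define k where "k = 2 * q + 1"
  have k: "real (fact k) + real M \<le> e * (real (fact (Suc k)) - real M)" "N + M \<le> (fact (Suc k) :: nat)"
  proof -
    have "Kr \<le> k" using \<open>Kr \<le> q\<close> unfolding k_def by simp
    then show "real (fact k) + real M \<le> e * (real (fact (Suc k)) - real M)" "N + M \<le> (fact (Suc k) :: nat)"
      using Kr by blast+
  qed
  define n where "n = (fact (Suc k) :: nat)"
  define L where "L = (fact k :: nat) + M"
  have bad: "\<not> x ((\<phi> ^^ i) \<gamma>0) = y ((\<phi> ^^ i) \<gamma>0)" if i: "L \<le> i" "i < n" for i
  proof -
    have inG: "(\<phi> ^^ i) \<gamma>0 \<in> \<Gamma>" using funpow_in[OF phi g0] by blast
    have notG: "(\<phi> ^^ i) \<gamma>0 \<notin> G" using K2 i unfolding L_def M_def by auto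
    have xv: "x ((\<phi> ^^ i) \<gamma>0) = gseq a b s i" using hx inG notG zpt_on[of i "(\<phi> ^^ i) \<gamma>0"] by auto
    have yv: "y ((\<phi> ^^ i) \<gamma>0) = gseq a b s' i" using hy inG notG zpt_on[of i "(\<phi> ^^ i) \<gamma>0"] by auto
    have blk: "(fact (2*q+1) :: nat) \<le> i" "i < fact (Suc (2*q+1))" using i unfolding L_def n_def k_def by auto
    have "pat s i \<longleftrightarrow> s m" "pat s' i \<longleftrightarrow> s' m"
      using pat_odd[OF blk] unfolding q_def by auto
    then show ?thesis using xv yv sm ab by (auto simp: gseq_def)
  qed
  have "card {i \<in> {0..<n}. x ((\<phi> ^^ i) \<gamma>0) = y ((\<phi> ^^ i) \<gamma>0)} \<le> L"
    by (rule count_interval2) (use bad in auto)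
  moreover have "real L \<le> e * real n"
  proof -
    have "real L \<le> e * (real (fact (Suc k)) - real M)" using k(1) unfolding L_def by simp
    also have "\<dots> \<le> e * real n" using e unfolding n_def by (simp add: mult_left_mono)
    finally show ?thesis .
  qed
  moreover have "N \<le> n" using k(2) unfolding n_def by linarith
  ultimately show ?thesis by (intro exI[of _ n]) auto
qed

end



lemma two_elems:
  assumes "finite X" "card X \<ge> 2"
  obtains a b where "a \<in> X" "b \<in> X" "a \<noteq> b"
proof -
  have "X \<noteq> {}" using assms by auto
  then obtain a where a: "a \<in> X" by blast
  have "\<exists>b\<in>X. b \<noteq> a"
  proof (rule ccontr)
    assume "\<not> (\<exists>b\<in>X. b \<noteq> a)"
    then have "X \<subseteq> {a}" by blast
    then have "card X \<le> 1" using card_mono[of "{a}" X] by simp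
    then show False using assms by simp
  qed
  then show ?thesis using a that by blast
qed

lemma periodic_pow:
  assumes "(\<phi> ^^ n) \<alpha> = \<alpha>"
  shows "(\<phi> ^^ (n * k)) \<alpha> = \<alpha>"
proof (induction k)
  case (Suc k)
  have "(\<phi> ^^ (n * Suc k)) \<alpha> = (\<phi> ^^ n) ((\<phi> ^^ (n * k)) \<alpha>)" by (simp add: funpow_add)
  then show ?case using Suc assms by simp
qed simp

lemma cyl_sub:
  assumes "u \<in> PiE \<Gamma> W" "v \<in> PiE \<Gamma> (\<lambda>_. X)" "\<forall>i\<in>{i \<in> \<Gamma>. W i \<noteq> X}. v i = u i"
  shows "v \<in> PiE \<Gamma> W"
proof -
  have "v i \<in> W i" if "i \<in> \<Gamma>" for i
  proof (cases "W i = X")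
    case True then show ?thesis using assms that by (auto simp: PiE_iff)
  next
    case False then show ?thesis using assms that by (auto simp: PiE_iff)
  qed
  then show ?thesis using assms(2) by (auto simp: PiE_iff)
qed

lemma dir1:
  assumes X: "finite X" "card X \<ge> 2" and phi: "\<phi> \<in> \<Gamma> \<rightarrow> \<Gamma>"
    and ms: "Metric_space (PiE \<Gamma> (\<lambda>_. X)) d"
    and mt: "Metric_space.mtopology (PiE \<Gamma> (\<lambda>_. X)) d = product_topology (\<lambda>_. discrete_topology X) \<Gamma>"
    and ddc: "dense_distributional_chaotic (product_topology (\<lambda>_. discrete_topology X) \<Gamma>) d (sigma_phi \<Gamma> \<phi>)"
    and per: "\<alpha> \<in> \<Gamma>" "n > 0" "(\<phi> ^^ n) \<alpha> = \<alpha>"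
  shows False
proof -
  let ?T = "product_topology (\<lambda>_. discrete_topology X) \<Gamma>"
  let ?M = "PiE \<Gamma> (\<lambda>_. X)"
  let ?\<sigma> = "sigma_phi \<Gamma> \<phi>"
  obtain A \<epsilon> where A: "A \<subseteq> ?M" "?T closure_of A = topspace ?T"
    and P: "\<forall>x\<in>A. \<forall>y\<in>A. x \<noteq> y \<longrightarrow> (\<forall>s>0. dc_F_upper d ?\<sigma> x y s = 1) \<and> dc_F_lower d ?\<sigma> x y \<epsilon> = 0"
    using ddc unfolding dense_distributional_chaotic_def by auto
  obtain a b where ab: "a \<in> X" "b \<in> X" "a \<noteq> b" using two_elems[OF X] by blast
  have pick: "\<exists>x\<in>A. x \<alpha> = c" if c: "c \<in> X" for c
  proof -
    define uc where "uc = restrict (\<lambda>_. c) \<Gamma>"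
    have uc: "uc \<in> ?M" using c unfolding uc_def by auto
    let ?U = "{v \<in> ?M. \<forall>i\<in>{\<alpha>}. v i = uc i}"
    have "openin ?T ?U" by (rule cyl_open) (use per in auto)
    moreover have "uc \<in> ?U" using uc by auto
    ultimately have "A \<inter> ?U \<noteq> {}" using A(2) unfolding dense_intersects_open by blast
    then show ?thesis using per(1) unfolding uc_def by auto
  qed
  obtain x where "x \<in> A" "x \<alpha> = a" using pick ab(1) by blast
  moreover obtain y where "y \<in> A" "y \<alpha> = b" using pick ab(2) by blast
  ultimately have xy: "x \<in> A" "y \<in> A" "x \<alpha> = a" "y \<alpha> = b" by blast+
  have xyM: "x \<in> ?M" "y \<in> ?M" using xy A by auto
  define Orb where "Orb = (\<lambda>j. (\<phi> ^^ j) \<alpha>) ` {..n}"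
  have Orb: "finite Orb" "Orb \<subseteq> \<Gamma>" unfolding Orb_def using funpow_in[OF phi per(1)] by auto
  obtain \<delta> where \<delta>: "\<delta> > 0" "\<forall>u\<in>?M. \<forall>v\<in>?M. d u v < \<delta> \<longrightarrow> (\<forall>i\<in>Orb. u i = v i)"
    using L1[OF X(1) ms mt Orb] by blast
  have far: "\<not> d ((?\<sigma> ^^ i) x) ((?\<sigma> ^^ i) y) < \<delta>" for i
  proof
    assume dd: "d ((?\<sigma> ^^ i) x) ((?\<sigma> ^^ i) y) < \<delta>"
    define j where "j = n - i mod n"
    define \<beta> where "\<beta> = (\<phi> ^^ j) \<alpha>"
    have "j \<le> n" unfolding j_def by simp
    then have bO: "\<beta> \<in> Orb" unfolding Orb_def \<beta>_def by auto
    have e1: "n * (i div n) + i mod n = i" by (rule mult_div_mod_eq)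
    have e2: "i mod n < n" using per(2) by simp
    have "i + j = n * (i div n) + n" unfolding j_def using e1 e2 by linarith
    then have "i + j = n * (i div n + 1)" by (simp add: algebra_simps)
    then have "(\<phi> ^^ i) \<beta> = \<alpha>"
      unfolding \<beta>_def using periodic_pow[OF per(3)] by (metis comp_apply funpow_add)
    moreover have "\<beta> \<in> \<Gamma>" using bO Orb by auto
    ultimately have "(?\<sigma> ^^ i) x \<beta> = a" "(?\<sigma> ^^ i) y \<beta> = b"
      using xy sigma_iter[OF phi xyM(1), of i] sigma_iter[OF phi xyM(2), of i] by auto
    moreover have "(?\<sigma> ^^ i) x \<beta> = (?\<sigma> ^^ i) y \<beta>"
      using \<delta>(2) sigma_iter_in[OF phi xyM(1), of i] sigma_iter_in[OF phi xyM(2), of i] dd bO by blast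
    ultimately show False using ab by simp
  qed
  have "x \<noteq> y" using xy ab by auto
  then have "dc_F_upper d ?\<sigma> x y \<delta> = 1" using P xy \<delta> by blast
  moreover have "dc_F_upper d ?\<sigma> x y \<delta> = 0"
    unfolding dc_F_upper_def dc_xi_def using far by (simp add: Limsup_const)
  ultimately show False by simp
qed



definition md :: "'g set \<Rightarrow> ('g \<Rightarrow> 'a) \<Rightarrow> ('g \<Rightarrow> 'a) \<Rightarrow> 'g \<Rightarrow> 'a" where
  "md F p w \<beta> = (if \<beta> \<in> F then p \<beta> else w \<beta>)"

lemma dir2:
  assumes X: "finite X" "card X \<ge> 2" and phi: "\<phi> \<in> \<Gamma> \<rightarrow> \<Gamma>"
    and cG: "countable \<Gamma>" and ne: "\<Gamma> \<noteq> {}"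
    and ms: "Metric_space (PiE \<Gamma> (\<lambda>_. X)) d"
    and mt: "Metric_space.mtopology (PiE \<Gamma> (\<lambda>_. X)) d = product_topology (\<lambda>_. discrete_topology X) \<Gamma>"
    and np: "\<not> (\<exists>\<alpha>\<in>\<Gamma>. \<exists>n>0. (\<phi> ^^ n) \<alpha> = \<alpha>)"
  shows "dense_distributional_chaotic (product_topology (\<lambda>_. discrete_topology X) \<Gamma>) d (sigma_phi \<Gamma> \<phi>)"
proof -
  let ?T = "product_topology (\<lambda>_. discrete_topology X) \<Gamma>"
  let ?M = "PiE \<Gamma> (\<lambda>_. X)"
  let ?\<sigma> = "sigma_phi \<Gamma> \<phi>"
  obtain a b where ab: "a \<in> X" "b \<in> X" "a \<noteq> b" using two_elems[OF X] by blast
  obtain \<gamma>0 where g0: "\<gamma>0 \<in> \<Gamma>" using ne by blast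
  define D where "D = Sigma {F. finite F \<and> F \<subseteq> \<Gamma>} (\<lambda>F. PiE F (\<lambda>_. X))"
  have cD: "countable D" unfolding D_def
  proof (rule countable_SIGMA)
    show "countable {F. finite F \<and> F \<subseteq> \<Gamma>}" using countable_Collect_finite_subset[OF cG] .
    show "countable (PiE F (\<lambda>_. X))" if "F \<in> {F. finite F \<and> F \<subseteq> \<Gamma>}" for F
      using that X(1) by (intro countable_finite finite_PiE) auto
  qed
  define HE where "HE p = (\<lambda>k. k = to_nat_on D p)" for p
  have injHE: "inj_on HE D"
  proof (rule inj_onI)
    fix p p' assume pp: "p \<in> D" "p' \<in> D" "HE p = HE p'"
    then have "to_nat_on D p = to_nat_on D p'" unfolding HE_def by metis
    then show "p = p'" using inj_on_to_nat_on[OF cD] pp by (meson inj_onD)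
  qed
  define Gs where "Gs s = (if s \<in> HE ` D then inv_into D HE s else ({}, \<lambda>_. undefined))" for s
  have GsD: "Gs s \<in> D" for s
  proof (cases "s \<in> HE ` D")
    case True then show ?thesis unfolding Gs_def by (simp add: inv_into_into)
  next
    case False then show ?thesis unfolding Gs_def D_def by auto
  qed
  have GsF: "finite (fst (Gs s))" "fst (Gs s) \<subseteq> \<Gamma>" "snd (Gs s) \<in> PiE (fst (Gs s)) (\<lambda>_. X)" for s
    using GsD[of s] unfolding D_def by auto
  define zz where "zz s = zpt \<Gamma> \<phi> \<gamma>0 a b s" for s
  define \<Phi> where "\<Phi> s = md (fst (Gs s)) (snd (Gs s)) (zz s)" for s
  have zzM: "zz s \<in> ?M" for s
    using ab unfolding zz_def zpt_def gseq_def by (auto simp: PiE_iff extensional_def)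
  have \<Phi>M: "\<Phi> s \<in> ?M" for s
  proof -
    have "\<Phi> s \<beta> \<in> X" if "\<beta> \<in> \<Gamma>" for \<beta>
      using that zzM[of s] GsF(3)[of s] unfolding \<Phi>_def md_def by (auto simp: PiE_iff)
    moreover have "\<Phi> s \<beta> = undefined" if "\<beta> \<notin> \<Gamma>" for \<beta>
      using that zzM[of s] GsF(2)[of s] unfolding \<Phi>_def md_def by (auto simp: PiE_iff extensional_def)
    ultimately show ?thesis by (auto simp: PiE_iff extensional_def)
  qed
  have hx: "\<forall>\<beta>\<in>\<Gamma>. \<beta> \<notin> fst (Gs s) \<union> fst (Gs s') \<longrightarrow> \<Phi> s \<beta> = zpt \<Gamma> \<phi> \<gamma>0 a b s \<beta>" for s s'
    unfolding \<Phi>_def md_def zz_def by auto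
  have hy: "\<forall>\<beta>\<in>\<Gamma>. \<beta> \<notin> fst (Gs s) \<union> fst (Gs s') \<longrightarrow> \<Phi> s' \<beta> = zpt \<Gamma> \<phi> \<gamma>0 a b s' \<beta>" for s s'
    unfolding \<Phi>_def md_def zz_def by auto
  have finG: "finite (fst (Gs s) \<union> fst (Gs s'))" for s s' using GsF by auto
  have injPhi: "inj \<Phi>"
  proof (rule injI, rule ccontr)
    fix s s' assume eq: "\<Phi> s = \<Phi> s'" and ne: "s \<noteq> s'"
    then obtain m where m: "s m \<noteq> s' m" by blast
    obtain n where n: "n \<ge> 1"
      "real (card {i \<in> {0..<n}. \<Phi> s ((\<phi> ^^ i) \<gamma>0) = \<Phi> s' ((\<phi> ^^ i) \<gamma>0)}) \<le> 1/2 * real n"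
      using differ_many[OF phi np g0 finG[of s s'] hx[of s s'] hy[of s s'] m ab(3), of "1/2" 1] by auto
    have "{i \<in> {0..<n}. \<Phi> s ((\<phi> ^^ i) \<gamma>0) = \<Phi> s' ((\<phi> ^^ i) \<gamma>0)} = {0..<n}" using eq by auto
    then show False using n by simp
  qed
  define A where "A = range \<Phi>"
  have AM: "A \<subseteq> topspace ?T" unfolding A_def using \<Phi>M by auto
  have unc: "uncountable A"
  proof
    assume "countable A"
    then have "countable (UNIV :: (nat \<Rightarrow> bool) set)"
      using countable_image_inj_on[of \<Phi> UNIV] injPhi unfolding A_def by blast
    then show False using uncountable_bool_fun by blast
  qed
  have dense: "?T closure_of A = topspace ?T"
    unfolding dense_intersects_open
  proof (intro allI impI)
    fix U assume U: "openin ?T U \<and> U \<noteq> {}"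
    then obtain u where u: "u \<in> U" by blast
    obtain W where W: "finite {i \<in> \<Gamma>. W i \<noteq> topspace (discrete_topology X)}" "u \<in> PiE \<Gamma> W" "PiE \<Gamma> W \<subseteq> U"
      using U u unfolding openin_product_topology_alt by meson
    then have W': "finite {i \<in> \<Gamma>. W i \<noteq> X}" by simp
    define F where "F = {i \<in> \<Gamma>. W i \<noteq> X}"
    define p where "p = restrict u F"
    have uM: "u \<in> ?M" using U u openin_subset by fastforce
    have pD: "(F, p) \<in> D" unfolding D_def F_def p_def using W' uM by (auto simp: PiE_iff)
    define s where "s = HE (F, p)"
    have "Gs s = (F, p)" unfolding Gs_def s_def using pD injHE by (simp add: inv_into_f_f)
    then have agree: "\<forall>i\<in>F. \<Phi> s i = u i" unfolding \<Phi>_def md_def p_def by auto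
    have "\<Phi> s \<in> PiE \<Gamma> W" by (rule cyl_sub[OF W(2) \<Phi>M]) (use agree in \<open>auto simp: F_def\<close>)
    then have "\<Phi> s \<in> A \<inter> U" using W(3) unfolding A_def by auto
    then show "A \<inter> U \<noteq> {}" by blast
  qed
  obtain \<delta>0 where \<delta>0: "\<delta>0 > 0" "\<forall>u\<in>?M. \<forall>v\<in>?M. d u v < \<delta>0 \<longrightarrow> (\<forall>i\<in>{\<gamma>0}. u i = v i)"
    using L1[OF X(1) ms mt, of "{\<gamma>0}"] g0 by auto
  have pair: "(\<forall>s0>0. dc_F_upper d ?\<sigma> x y s0 = 1) \<and> dc_F_lower d ?\<sigma> x y \<delta>0 = 0"
    if xy: "x \<in> A" "y \<in> A" "x \<noteq> y" for x y
  proof -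
    obtain s s' where ss: "x = \<Phi> s" "y = \<Phi> s'" using xy unfolding A_def by blast
    have "s \<noteq> s'" using xy(3) ss by metis
    then obtain m where m: "s m \<noteq> s' m" by blast
    have xM: "x \<in> ?M" and yM: "y \<in> ?M" using ss \<Phi>M by auto
    have it: "(?\<sigma> ^^ i) x \<beta> = x ((\<phi> ^^ i) \<beta>)" "(?\<sigma> ^^ i) y \<beta> = y ((\<phi> ^^ i) \<beta>)" if "\<beta> \<in> \<Gamma>" for i \<beta>
      using sigma_iter[OF phi xM, of i] sigma_iter[OF phi yM, of i] that by auto
    have itM: "(?\<sigma> ^^ i) x \<in> ?M" "(?\<sigma> ^^ i) y \<in> ?M" for i
      using sigma_iter_in[OF phi xM] sigma_iter_in[OF phi yM] by auto
    have up: "dc_F_upper d ?\<sigma> x y s0 = 1" if s0: "s0 > 0" for s0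
    proof -
      obtain Fs where Fs: "finite Fs" "Fs \<subseteq> \<Gamma>" "\<forall>u\<in>?M. \<forall>v\<in>?M. (\<forall>i\<in>Fs. u i = v i) \<longrightarrow> d u v < s0"
        using L2[OF X(1) ms mt s0] by blast
      show ?thesis unfolding dc_F_upper_def
      proof (rule limsup_one[of "\<lambda>n. dc_xi d ?\<sigma> x y s0 n"])
        fix n show "dc_xi d ?\<sigma> x y s0 n \<le> n"
          unfolding dc_xi_def by (rule order_trans[OF card_mono[of "{0..<n}"]]) auto
      next
        fix e :: real and N :: nat assume e: "e > 0"
        obtain n where n: "n \<ge> N" "(1 - e) * real n \<le> real (card {i \<in> {0..<n}. \<forall>\<beta>\<in>Fs. x ((\<phi> ^^ i) \<beta>) = y ((\<phi> ^^ i) \<beta>)})"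
          using agree_many[OF phi np g0 Fs(1,2) finG[of s s'] hx[of s s', unfolded ss[symmetric]] hy[of s s', unfolded ss[symmetric]] e, of N]
          by blast
        have "{i \<in> {0..<n}. \<forall>\<beta>\<in>Fs. x ((\<phi> ^^ i) \<beta>) = y ((\<phi> ^^ i) \<beta>)} \<subseteq> {i \<in> {0..<n}. d ((?\<sigma> ^^ i) x) ((?\<sigma> ^^ i) y) < s0}"
        proof safe
          fix i assume "i \<in> {0..<n}" "\<forall>\<beta>\<in>Fs. x ((\<phi> ^^ i) \<beta>) = y ((\<phi> ^^ i) \<beta>)"
          then have "\<forall>\<beta>\<in>Fs. (?\<sigma> ^^ i) x \<beta> = (?\<sigma> ^^ i) y \<beta>" using it Fs(2) by auto
          then show "d ((?\<sigma> ^^ i) x) ((?\<sigma> ^^ i) y) < s0" using Fs(3) itM by blast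
        qed
        then have "card {i \<in> {0..<n}. \<forall>\<beta>\<in>Fs. x ((\<phi> ^^ i) \<beta>) = y ((\<phi> ^^ i) \<beta>)} \<le> dc_xi d ?\<sigma> x y s0 n"
          unfolding dc_xi_def by (intro card_mono) auto
        then have "real (card {i \<in> {0..<n}. \<forall>\<beta>\<in>Fs. x ((\<phi> ^^ i) \<beta>) = y ((\<phi> ^^ i) \<beta>)}) \<le> real (dc_xi d ?\<sigma> x y s0 n)"
          by (rule of_nat_mono)
        then have "(1 - e) * real n \<le> real (dc_xi d ?\<sigma> x y s0 n)" using n(2) by linarith
        then show "\<exists>n\<ge>N. (1 - e) * real n \<le> real (dc_xi d ?\<sigma> x y s0 n)" using n(1) by blast
      qed
    qed
    have low: "dc_F_lower d ?\<sigma> x y \<delta>0 = 0"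
      unfolding dc_F_lower_def
    proof (rule liminf_zero[of "\<lambda>n. dc_xi d ?\<sigma> x y \<delta>0 n"])
      fix e :: real and N :: nat assume e: "e > 0"
      obtain n where n: "n \<ge> N" "real (card {i \<in> {0..<n}. x ((\<phi> ^^ i) \<gamma>0) = y ((\<phi> ^^ i) \<gamma>0)}) \<le> e * real n"
        using differ_many[OF phi np g0 finG[of s s'] hx[of s s', unfolded ss[symmetric]] hy[of s s', unfolded ss[symmetric]] m ab(3) e, of N]
        by blast
      have "{i \<in> {0..<n}. d ((?\<sigma> ^^ i) x) ((?\<sigma> ^^ i) y) < \<delta>0} \<subseteq> {i \<in> {0..<n}. x ((\<phi> ^^ i) \<gamma>0) = y ((\<phi> ^^ i) \<gamma>0)}"
      proof safe
        fix i assume "i \<in> {0..<n}" "d ((?\<sigma> ^^ i) x) ((?\<sigma> ^^ i) y) < \<delta>0"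
        then have "(?\<sigma> ^^ i) x \<gamma>0 = (?\<sigma> ^^ i) y \<gamma>0" using \<delta>0(2) itM by blast
        then show "x ((\<phi> ^^ i) \<gamma>0) = y ((\<phi> ^^ i) \<gamma>0)" using it g0 by auto
      qed
      then have "dc_xi d ?\<sigma> x y \<delta>0 n \<le> card {i \<in> {0..<n}. x ((\<phi> ^^ i) \<gamma>0) = y ((\<phi> ^^ i) \<gamma>0)}"
        unfolding dc_xi_def by (intro card_mono) auto
      then have "real (dc_xi d ?\<sigma> x y \<delta>0 n) \<le> real (card {i \<in> {0..<n}. x ((\<phi> ^^ i) \<gamma>0) = y ((\<phi> ^^ i) \<gamma>0)})"
        by (rule of_nat_mono)
      then have "real (dc_xi d ?\<sigma> x y \<delta>0 n) \<le> e * real n" using n(2) by linarith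
      then show "\<exists>n\<ge>N. real (dc_xi d ?\<sigma> x y \<delta>0 n) \<le> e * real n" using n(1) by blast
    qed
    show ?thesis using up low by blast
  qed
  have "\<exists>\<epsilon>>0. \<forall>x\<in>A. \<forall>y\<in>A. x \<noteq> y \<longrightarrow>
            (\<forall>s>0. dc_F_upper d ?\<sigma> x y s = 1) \<and> dc_F_lower d ?\<sigma> x y \<epsilon> = 0"
    using \<delta>0(1) pair by (intro exI[of _ \<delta>0]) simp
  then show ?thesis unfolding dense_distributional_chaotic_def
    using AM dense unc by (intro exI[of _ A]) simp
qed


theorem theorem4p4:
  fixes X :: "'a set" and \<Gamma> :: "'g set" and \<phi> :: "'g \<Rightarrow> 'g"
    and d :: "('g \<Rightarrow> 'a) \<Rightarrow> ('g \<Rightarrow> 'a) \<Rightarrow> real"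
  assumes "finite X" and "card X \<ge> 2"
    and "countable \<Gamma>" and "\<Gamma> \<noteq> {}"
    and "\<phi> \<in> \<Gamma> \<rightarrow> \<Gamma>"
    and "Metric_space (topspace (product_topology (\<lambda>_. discrete_topology X) \<Gamma>)) d"
    and "Metric_space.mtopology (topspace (product_topology (\<lambda>_. discrete_topology X) \<Gamma>)) d
           = product_topology (\<lambda>_. discrete_topology X) \<Gamma>"
  shows "dense_distributional_chaotic (product_topology (\<lambda>_. discrete_topology X) \<Gamma>) d (sigma_phi \<Gamma> \<phi>)
         \<longleftrightarrow> \<not> (\<exists>\<alpha>\<in>\<Gamma>. \<exists>n>0. (\<phi> ^^ n) \<alpha> = \<alpha>)"
proof -
  have top: "topspace (product_topology (\<lambda>_. discrete_topology X) \<Gamma>) = PiE \<Gamma> (\<lambda>_. X)" by simp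
  have ms: "Metric_space (PiE \<Gamma> (\<lambda>_. X)) d" using assms(6) by (simp only: top)
  have mt: "Metric_space.mtopology (PiE \<Gamma> (\<lambda>_. X)) d = product_topology (\<lambda>_. discrete_topology X) \<Gamma>"
    using assms(7) by (simp only: top)
  show ?thesis
  proof
    assume ddc: "dense_distributional_chaotic (product_topology (\<lambda>_. discrete_topology X) \<Gamma>) d (sigma_phi \<Gamma> \<phi>)"
    show "\<not> (\<exists>\<alpha>\<in>\<Gamma>. \<exists>n>0. (\<phi> ^^ n) \<alpha> = \<alpha>)"
      using dir1[OF assms(1,2,5) ms mt ddc] by blast
  next
    assume np: "\<not> (\<exists>\<alpha>\<in>\<Gamma>. \<exists>n>0. (\<phi> ^^ n) \<alpha> = \<alpha>)"
    show "dense_distributional_chaotic (product_topology (\<lambda>_. discrete_topology X) \<Gamma>) d (sigma_phi \<Gamma> \<phi>)"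
      by (rule dir2[OF assms(1,2,5,3,4) ms mt np])
  qed
qed

end
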